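(* The construction $\mathrm{Env}$ is a functor from the category of $k$-coloured operads (with coloured operad morphisms) to the category of operads, and it preserves injections and surjections. Explicitly, the following hold. (i) For every coloured operad morphism $\phi:\mathcal C_1\to\mathcal C_2$, there is a well-defined operad morphism $\mathrm{Env}(\phi):\mathrm{Env}(\mathcal C_1)\to\mathrm{Env}(\mathcal C_2)$ determined by $\mathrm{Env}(\phi)(\mathfrak c(x))=\mathfrak c(\phi(x))$ for $x\in\mathcal C_1^+$. (ii) $\mathrm{Env}(\psi\circ\phi)=\mathrm{Env}(\psi)\circ\mathrm{Env}(\phi)$, and $\mathrm{Env}(\mathrm{id})=\mathrm{id}$. (iii) If $\phi$ is injective (resp. surjective), then $\mathrm{Env}(\phi)$ is injective (resp. surjective).
   Context: All operads are nonsymmetric operads in the category of sets. Fix $k\ge1$ and write $[k]=\{1,\dots,k\}$. A $k$-coloured operad $\mathcal C=\biguplus_{n\ge1}\mathcal C(n)$ assigns to each $x\in\mathcal C(n)$ an output colour $\mathrm{Out}(x)\in[k]$ and input colours $\mathrm{In}_1(x),\dots,\mathrm{In}_n(x)\in[k]$. It has partial compositions $x\circ_i y$, defined exactly when $\mathrm{Out}(y)=\mathrm{In}_i(x)$, satisfying the usual coloured operad axioms. It is assumed that $\mathcal C(1)=\{\mathbf 1_c:c\in[k]\}$ consists of units ($\mathbf 1_c$ has output and input colour $c$) and that each $\mathcal C(n)$ is finite. An operad is a $1$-coloured operad. A coloured operad morphism $\phi:\mathcal C_1\to\mathcal C_2$ between $k$-coloured operads is a map that preserves arities and commutes with the composition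 maps. Moreover, whenever $x\circ_i y$ is defined in $\mathcal C_1$, the composition $\phi(x)\circ_i\phi(y)$ is required to be defined in $\mathcal C_2$. Let $\mathcal C^+=\mathcal C\setminus\mathcal C(1)$. The enveloping operad $\mathrm{Env}(\mathcal C)$ is the quotient of the free uncoloured operad generated by the elements of $\mathcal C^+$ (colours forgotten, $x\in\mathcal C(n)$ being an $n$-ary generator) by the smallest operadic congruence $\equiv$ with $\mathfrak c(x)\circ_i\mathfrak c(y)\equiv\mathfrak c(x\circ_i y)$ whenever $x\circ_i y$ is defined in $\mathcal C$. Here $\mathfrak c(x)$ is the corolla (one-internal-node syntax tree) labelled $x$, and we also write $\mathfrak c(x)$ for its class. *)

theory Defs
  imports Main
begin

text \<open>A k-coloured operad: carrier of elements, arity, output colour, input colours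
  (indexed 1..arity), partial composition comp x i y (= x o_i y, positions 1-indexed)
  and the units (unit c = 1_c for colours c in {1..k}).\<close>

record 'a coperad =
  carrier :: "'a set"
  arity :: "'a \<Rightarrow> nat"
  outc :: "'a \<Rightarrow> nat"
  inc :: "'a \<Rightarrow> nat \<Rightarrow> nat"
  comp :: "'a \<Rightarrow> nat \<Rightarrow> 'a \<Rightarrow> 'a"
  cunit :: "nat \<Rightarrow> 'a"

definition composable :: "'a coperad \<Rightarrow> 'a \<Rightarrow> nat \<Rightarrow> 'a \<Rightarrow> bool" where
  "composable C x i y \<longleftrightarrow> x \<in> carrier C \<and> y \<in> carrier C \<and> 1 \<le> i \<and> i \<le> arity C x
     \<and> outc C y = inc C x i"

definition coloured_operad :: "nat \<Rightarrow> 'a coperad \<Rightarrow> bool" where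
  "coloured_operad k C \<longleftrightarrow>
     (\<forall>x\<in>carrier C. 1 \<le> arity C x \<and> outc C x \<in> {1..k}
                     \<and> (\<forall>i\<in>{1..arity C x}. inc C x i \<in> {1..k}))
   \<and> (\<forall>c\<in>{1..k}. cunit C c \<in> carrier C \<and> arity C (cunit C c) = 1
                   \<and> outc C (cunit C c) = c \<and> inc C (cunit C c) 1 = c)
   \<and> {x\<in>carrier C. arity C x = 1} = cunit C ` {1..k}
   \<and> (\<forall>n. finite {x\<in>carrier C. arity C x = n})
   \<and> (\<forall>x y i. composable C x i y \<longrightarrow>
        comp C x i y \<in> carrier C
      \<and> arity C (comp C x i y) = arity C x + arity C y - 1
      \<and> outc C (comp C x i y) = outc C x
      \<and> (\<forall>j\<in>{1..arity C x + arity C y - 1}.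
           inc C (comp C x i y) j =
             (if j < i then inc C x j
              else if j < i + arity C y then inc C y (j + 1 - i)
              else inc C x (j + 1 - arity C y))))
   \<and> (\<forall>x\<in>carrier C. comp C (cunit C (outc C x)) 1 x = x
                     \<and> (\<forall>i\<in>{1..arity C x}. comp C x i (cunit C (inc C x i)) = x))
   \<and> (\<forall>x y z i j. composable C x i y \<and> composable C y j z \<longrightarrow>
        comp C (comp C x i y) (i + j - 1) z = comp C x i (comp C y j z))
   \<and> (\<forall>x y z i j. composable C x i y \<and> composable C x j z \<and> i < j \<longrightarrow>
        comp C (comp C x i y) (j + arity C y - 1) z = comp C (comp C x j z) i y)"

definition coperad_morphism :: "'a coperad \<Rightarrow> 'b coperad \<Rightarrow> ('a \<Rightarrow> 'b) \<Rightarrow> bool" where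
  "coperad_morphism C1 C2 \<phi> \<longleftrightarrow>
     (\<forall>x\<in>carrier C1. \<phi> x \<in> carrier C2 \<and> arity C2 (\<phi> x) = arity C1 x)
   \<and> (\<forall>x i y. composable C1 x i y \<longrightarrow>
        composable C2 (\<phi> x) i (\<phi> y) \<and> \<phi> (comp C1 x i y) = comp C2 (\<phi> x) i (\<phi> y))"

record 'a operad =
  ocarrier :: "'a set"
  oarity :: "'a \<Rightarrow> nat"
  ocomp :: "'a \<Rightarrow> nat \<Rightarrow> 'a \<Rightarrow> 'a"
  ounit :: "'a"

definition operad_hom :: "'a operad \<Rightarrow> 'b operad \<Rightarrow> ('a \<Rightarrow> 'b) \<Rightarrow> bool" where
  "operad_hom O1 O2 F \<longleftrightarrow>
     (\<forall>X\<in>ocarrier O1. F X \<in> ocarrier O2 \<and> oarity O2 (F X) = oarity O1 X)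
   \<and> F (ounit O1) = ounit O2
   \<and> (\<forall>X\<in>ocarrier O1. \<forall>Y\<in>ocarrier O1. \<forall>i\<in>{1..oarity O1 X}.
        F (ocomp O1 X i Y) = ocomp O2 (F X) i (F Y))"

datatype 'a tree = Leaf | Node 'a "'a tree list"

fun leaves :: "'a tree \<Rightarrow> nat" and leaves_list :: "'a tree list \<Rightarrow> nat" where
  "leaves Leaf = 1"
| "leaves (Node x ts) = leaves_list ts"
| "leaves_list [] = 0"
| "leaves_list (t # ts) = leaves t + leaves_list ts"

text \<open>graft t i s: substitute s into the i-th leaf of t (1-indexed), i.e. t o_i s.\<close>

fun graft :: "'a tree \<Rightarrow> nat \<Rightarrow> 'a tree \<Rightarrow> 'a tree"
  and graft_list :: "'a tree list \<Rightarrow> nat \<Rightarrow> 'a tree \<Rightarrow> 'a tree list" where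
  "graft Leaf i s = (if i = 1 then s else Leaf)"
| "graft (Node x ts) i s = Node x (graft_list ts i s)"
| "graft_list [] i s = []"
| "graft_list (t # ts) i s =
     (if i \<le> leaves t then graft t i s # ts else t # graft_list ts (i - leaves t) s)"

definition corolla :: "'a coperad \<Rightarrow> 'a \<Rightarrow> 'a tree" where
  "corolla C x = Node x (replicate (arity C x) Leaf)"

text \<open>C^+ : the non-unit elements.\<close>
definition cplus :: "'a coperad \<Rightarrow> 'a set" where
  "cplus C = {x\<in>carrier C. arity C x \<noteq> 1}"

text \<open>Elements of the free uncoloured operad on C^+ (colours forgotten).\<close>
inductive ftree :: "'a coperad \<Rightarrow> 'a tree \<Rightarrow> bool" for C where
  ftree_Leaf: "ftree C Leaf"
| ftree_Node: "x \<in> cplus C \<Longrightarrow> length ts = arity C x \<Longrightarrow> \<forall>t\<in>set ts. ftree C t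
     \<Longrightarrow> ftree C (Node x ts)"

text \<open>The smallest operadic congruence generated by c(x) o_i c(y) == c(x o_i y).\<close>
inductive env_rel :: "'a coperad \<Rightarrow> 'a tree \<Rightarrow> 'a tree \<Rightarrow> bool" for C where
  env_gen: "composable C x i y \<Longrightarrow> x \<in> cplus C \<Longrightarrow> y \<in> cplus C \<Longrightarrow>
     env_rel C (graft (corolla C x) i (corolla C y)) (corolla C (comp C x i y))"
| env_refl: "ftree C t \<Longrightarrow> env_rel C t t"
| env_sym: "env_rel C s t \<Longrightarrow> env_rel C t s"
| env_trans: "env_rel C s t \<Longrightarrow> env_rel C t u \<Longrightarrow> env_rel C s u"
| env_cong: "env_rel C s s' \<Longrightarrow> env_rel C t t' \<Longrightarrow> 1 \<le> i \<Longrightarrow> i \<le> leaves s \<Longrightarrow>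
     env_rel C (graft s i t) (graft s' i t')"

definition env_class :: "'a coperad \<Rightarrow> 'a tree \<Rightarrow> 'a tree set" where
  "env_class C t = {t'. env_rel C t t'}"

definition Env :: "'a coperad \<Rightarrow> 'a tree set operad" where
  "Env C = \<lparr> ocarrier = {env_class C t | t. ftree C t},
             oarity = (\<lambda>X. leaves (SOME t. t \<in> X)),
             ocomp = (\<lambda>X i Y. env_class C (graft (SOME t. t \<in> X) i (SOME t. t \<in> Y))),
             ounit = env_class C Leaf \<rparr>"

definition env_map :: "'b coperad \<Rightarrow> ('a \<Rightarrow> 'b) \<Rightarrow> 'a tree set \<Rightarrow> 'b tree set" where
  "env_map C2 \<phi> X = env_class C2 (map_tree \<phi> (SOME t. t \<in> X))"

end

theory Submission
  imports Defs "HOL-Library.Confluence"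
begin

lemma leaves_list_sum: "leaves_list ts = sum_list (map leaves ts)"
  by (induction ts) auto

lemma leaves_list_append[simp]: "leaves_list (A @ B) = leaves_list A + leaves_list B"
  by (simp add: leaves_list_sum)

lemma leaves_list_rep[simp]: "leaves_list (replicate n Leaf) = n"
  by (induction n) auto

lemma graft_0': "i = 0 \<Longrightarrow> graft t i s = t" "i = 0 \<Longrightarrow> graft_list ts i s = ts"
  by (induction t i s and ts i s rule: graft_graft_list.induct) auto

lemma graft_0: "graft t 0 s = t" "graft_list ts 0 s = ts"
  by (simp_all add: graft_0')

lemma graft_list_append:
  "graft_list (A @ B) i t = (if i \<le> leaves_list A then graft_list A i t @ B
      else A @ graft_list B (i - leaves_list A) t)"
proof (induction A arbitrary: i)
  case Nil then show ?case by (auto simp: graft_0)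
next
  case (Cons a A) then show ?case by (auto simp: diff_diff_add)
qed

lemma length_graft_list[simp]: "length (graft_list ts i t) = length ts"
  by (induction ts arbitrary: i) auto

lemma leaves_graft:
  "1 \<le> i \<Longrightarrow> i \<le> leaves s \<Longrightarrow> leaves (graft s i t) = leaves s + leaves t - 1"
  "1 \<le> i \<Longrightarrow> i \<le> leaves_list ts \<Longrightarrow> leaves_list (graft_list ts i t) = leaves_list ts + leaves t - 1"
  by (induction s i t and ts i t rule: graft_graft_list.induct) auto

lemma graft_list_at:
  "1 \<le> i \<Longrightarrow> i \<le> leaves c \<Longrightarrow> graft_list (A @ c # B) (leaves_list A + i) t = A @ graft c i t # B"
  by (simp add: graft_list_append)

lemma graft_list_locate:
  "1 \<le> i \<Longrightarrow> i \<le> leaves_list ts \<Longrightarrow>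
    \<exists>A c B i'. ts = A @ c # B \<and> i = leaves_list A + i' \<and> 1 \<le> i' \<and> i' \<le> leaves c"
proof (induction ts arbitrary: i)
  case Nil then show ?case by simp
next
  case (Cons a ts)
  show ?case
  proof (cases "i \<le> leaves a")
    case True
    then show ?thesis using Cons.prems by (intro exI[of _ "[]"]) auto
  next
    case False
    have "1 \<le> i - leaves a" "i - leaves a \<le> leaves_list ts" using False Cons.prems by auto
    then obtain A c B i' where "ts = A @ c # B" "i - leaves a = leaves_list A + i'" "1 \<le> i'" "i' \<le> leaves c"
      using Cons.IH by blast
    then show ?thesis using False by (intro exI[of _ "a # A"] exI[of _ c] exI[of _ B] exI[of _ i']) auto
  qed
qed

lemma ftree_Node_iff:
  "ftree C (Node x ts) \<longleftrightarrow> x \<in> cplus C \<and> length ts = arity C x \<and> (\<forall>t\<in>set ts. ftree C t)"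
  by (auto elim: ftree.cases intro: ftree.intros)

lemma ftree_graft:
  "ftree C s \<Longrightarrow> ftree C t \<Longrightarrow> ftree C (graft s i t)"
  "(\<forall>s\<in>set ss. ftree C s) \<Longrightarrow> ftree C t \<Longrightarrow> (\<forall>s\<in>set (graft_list ss i t). ftree C s)"
  by (induction s i t and ss i t rule: graft_graft_list.induct) (auto simp: ftree_Node_iff)

lemma corolla_ftree: "x \<in> cplus C \<Longrightarrow> ftree C (corolla C x)"
  by (auto simp: corolla_def ftree_Node_iff intro: ftree.intros)

lemma leaves_corolla[simp]: "leaves (corolla C x) = arity C x"
  by (simp add: corolla_def)

lemma co_arity: "coloured_operad k C \<Longrightarrow> x \<in> carrier C \<Longrightarrow> 1 \<le> arity C x"
  unfolding coloured_operad_def apply (elim conjE) apply (thin_tac "_ = cunit C ` _") by blast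

lemma co_comp: "coloured_operad k C \<Longrightarrow> composable C x i y \<Longrightarrow>
    comp C x i y \<in> carrier C
  \<and> arity C (comp C x i y) = arity C x + arity C y - 1
  \<and> outc C (comp C x i y) = outc C x
  \<and> (\<forall>j\<in>{1..arity C x + arity C y - 1}.
           inc C (comp C x i y) j =
             (if j < i then inc C x j
              else if j < i + arity C y then inc C y (j + 1 - i)
              else inc C x (j + 1 - arity C y)))"
  unfolding coloured_operad_def apply (elim conjE) apply (thin_tac "_ = cunit C ` _") by blast

lemma co_assoc: "coloured_operad k C \<Longrightarrow> composable C x i y \<Longrightarrow> composable C y j z \<Longrightarrow>
        comp C (comp C x i y) (i + j - 1) z = comp C x i (comp C y j z)"
  unfolding coloured_operad_def apply (elim conjE) apply (thin_tac "_ = cunit C ` _") by blast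

lemma co_par: "coloured_operad k C \<Longrightarrow> composable C x i y \<Longrightarrow> composable C x j z \<Longrightarrow> i < j \<Longrightarrow>
        comp C (comp C x i y) (j + arity C y - 1) z = comp C (comp C x j z) i y"
  unfolding coloured_operad_def apply (elim conjE) apply (thin_tac "_ = cunit C ` _") by blast

lemma cplus_arity: "coloured_operad k C \<Longrightarrow> x \<in> cplus C \<Longrightarrow> 2 \<le> arity C x"
  using co_arity[of k C x] by (force simp: cplus_def)

lemma comp_cplus: "coloured_operad k C \<Longrightarrow> composable C x i y \<Longrightarrow> x \<in> cplus C \<Longrightarrow> y \<in> cplus C
   \<Longrightarrow> comp C x i y \<in> cplus C"
  using co_comp[of k C x i y] cplus_arity[of k C x] cplus_arity[of k C y] by (auto simp: cplus_def)

inductive cstep :: "'a coperad \<Rightarrow> 'a tree \<Rightarrow> 'a tree \<Rightarrow> bool" for C where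
  cs_root: "outc C y = inc C x (Suc (length A)) \<Longrightarrow>
     cstep C (Node x (A @ Node y us # B)) (Node (comp C x (Suc (length A)) y) (A @ us @ B))"
| cs_ctx: "cstep C t t' \<Longrightarrow> cstep C (Node x (A @ t # B)) (Node x (A @ t' # B))"

lemma cs_root': "outc C y = inc C x p \<Longrightarrow> p = Suc (length A) \<Longrightarrow> ts = A @ Node y us # B \<Longrightarrow>
   r = A @ us @ B \<Longrightarrow> cstep C (Node x ts) (Node (comp C x p y) r)"
  using cs_root[of C y x A us B] by simp

lemma cs_ctx': "cstep C t t' \<Longrightarrow> ts = A @ t # B \<Longrightarrow> r = A @ t' # B \<Longrightarrow> cstep C (Node x ts) (Node x r)"
  using cs_ctx[of C t t' x A B] by simp

lemma cstep_leaves: "cstep C s t \<Longrightarrow> leaves s = leaves t"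
  by (induction rule: cstep.induct) auto

lemma root_composable:
  assumes "ftree C (Node x (A @ Node y us # B))" "outc C y = inc C x (Suc (length A))"
  shows "composable C x (Suc (length A)) y" "x \<in> cplus C" "y \<in> cplus C"
    "length us = arity C y" "arity C x = length A + length B + 1"
  using assms by (auto simp: ftree_Node_iff composable_def cplus_def)

lemma cstep_ftree: "cstep C s t \<Longrightarrow> coloured_operad k C \<Longrightarrow> ftree C s \<Longrightarrow> ftree C t"
proof (induction rule: cstep.induct)
  case (cs_root y x A us B)
  note rc = root_composable[OF cs_root.prems(2) cs_root.hyps]
  have "comp C x (Suc (length A)) y \<in> cplus C"
    using comp_cplus[OF cs_root.prems(1) rc(1-3)] .
  moreover have "arity C (comp C x (Suc (length A)) y) = arity C x + arity C y - 1"
    using co_comp[OF cs_root.prems(1) rc(1)] by blast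
  ultimately show ?case using cs_root.prems(2) rc by (auto simp: ftree_Node_iff)
next
  case (cs_ctx t t' x A B)
  then show ?case by (auto simp: ftree_Node_iff)
qed

lemma lift1: "cstep C s s1 \<Longrightarrow> cstep C (graft s i u) (graft s1 i u)"
proof (induction arbitrary: i rule: cstep.induct)
  case (cs_root y x A us B)
  show ?case
  proof (cases "i \<le> leaves_list A")
    case True
    then show ?thesis using cs_root
      by (auto simp: graft_list_append intro!: cs_root'[where A="graft_list A i u"])
  next
    case F1: False
    show ?thesis
    proof (cases "i - leaves_list A \<le> leaves_list us")
      case True
      then show ?thesis using cs_root F1
        by (auto simp: graft_list_append intro!: cs_root'[where A=A])
    next
      case False
      then show ?thesis using cs_root F1
        by (auto simp: graft_list_append diff_diff_add intro!: cs_root'[where A=A])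
    qed
  qed
next
  case (cs_ctx t t' x A B)
  have lv: "leaves t = leaves t'" using cstep_leaves[OF cs_ctx.hyps] .
  show ?case
  proof (cases "i \<le> leaves_list A")
    case True
    then show ?thesis using cs_ctx by (auto simp: graft_list_append intro!: cs_ctx'[where A="graft_list A i u"])
  next
    case F1: False
    show ?thesis
    proof (cases "i - leaves_list A \<le> leaves t")
      case True
      then show ?thesis using cs_ctx F1 lv
        by (auto simp: graft_list_append intro!: cs_ctx'[where A=A and t="graft t (i - leaves_list A) u"])
    next
      case False
      then show ?thesis using cs_ctx F1 lv by (auto simp: graft_list_append intro!: cs_ctx'[where A=A])
    qed
  qed
qed

lemma lift2: "cstep C t t1 \<Longrightarrow> 1 \<le> i \<Longrightarrow> i \<le> leaves s \<Longrightarrow> cstep C (graft s i t) (graft s i t1)"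
proof (induction s arbitrary: i)
  case Leaf
  then show ?case by simp
next
  case (Node x ts)
  then obtain A c B i' where d: "ts = A @ c # B" "i = leaves_list A + i'" "1 \<le> i'" "i' \<le> leaves c"
    using graft_list_locate[of i ts] by auto
  have "cstep C (graft c i' t) (graft c i' t1)" using Node d by auto
  then show ?case using d by (auto simp: graft_list_at intro!: cs_ctx')
qed

definition R :: "'a coperad \<Rightarrow> 'a tree \<Rightarrow> 'a tree \<Rightarrow> bool" where
  "R C s t \<longleftrightarrow> ftree C s \<and> cstep C s t"

lemma R_ftree: "coloured_operad k C \<Longrightarrow> R C s t \<Longrightarrow> ftree C t"
  unfolding R_def using cstep_ftree by metis

lemma Rs_ftree: "(R C)\<^sup>*\<^sup>* s t \<Longrightarrow> coloured_operad k C \<Longrightarrow> ftree C s \<Longrightarrow> ftree C t"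
  by (induction rule: rtranclp_induct) (auto dest: R_ftree)

lemma Rs_leaves: "(R C)\<^sup>*\<^sup>* s t \<Longrightarrow> leaves s = leaves t"
  by (induction rule: rtranclp_induct) (auto simp: R_def dest: cstep_leaves)

lemma lift1s: "(R C)\<^sup>*\<^sup>* s s1 \<Longrightarrow> coloured_operad k C \<Longrightarrow> ftree C t \<Longrightarrow>
   (R C)\<^sup>*\<^sup>* (graft s i t) (graft s1 i t)"
proof (induction rule: rtranclp_induct)
  case base then show ?case by simp
next
  case (step a b)
  have "R C (graft a i t) (graft b i t)"
    using step lift1 ftree_graft(1) by (auto simp: R_def)
  then show ?case using step by (meson rtranclp.rtrancl_into_rtrancl)
qed

lemma lift2s: "(R C)\<^sup>*\<^sup>* t t1 \<Longrightarrow> coloured_operad k C \<Longrightarrow> ftree C s \<Longrightarrow> 1 \<le> i \<Longrightarrow> i \<le> leaves s \<Longrightarrow>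
   (R C)\<^sup>*\<^sup>* (graft s i t) (graft s i t1)"
proof (induction rule: rtranclp_induct)
  case base then show ?case by simp
next
  case (step a b)
  have "R C (graft s i a) (graft s i b)"
    using step lift2 ftree_graft(1) by (auto simp: R_def)
  then show ?case using step by (meson rtranclp.rtrancl_into_rtrancl)
qed

lemma split3: "A @ t # B = A' @ t' # B' \<Longrightarrow>
   (A = A' \<and> t = t' \<and> B = B') \<or> (\<exists>M. A' = A @ t # M \<and> B = M @ t' # B')
   \<or> (\<exists>M. A = A' @ t' # M \<and> B' = M @ t # B)"
proof (induction A arbitrary: A')
  case Nil then show ?case by (cases A') auto
next
  case (Cons a A) then show ?case by (cases A') auto
qed

lemma rr:
  assumes co: "coloured_operad k C"
    and ft: "ftree C (Node x (A @ Node y us # M @ Node z vs # B))"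
    and c1: "outc C y = inc C x (Suc (length A))"
    and c2: "outc C z = inc C x (Suc (length (A @ Node y us # M)))"
  shows "\<exists>u. cstep C (Node (comp C x (Suc (length A)) y) (A @ us @ M @ Node z vs # B)) u
          \<and> cstep C (Node (comp C x (Suc (length (A @ Node y us # M))) z) (A @ Node y us # M @ vs @ B)) u"
proof -
  define p where "p = Suc (length A)"
  define q where "q = Suc (length (A @ Node y us # M))"
  have fx: "x \<in> cplus C" "length (A @ Node y us # M @ Node z vs # B) = arity C x"
    and fy: "y \<in> cplus C" "length us = arity C y"
    and fz: "z \<in> cplus C" "length vs = arity C z"
    using ft by (auto simp: ftree_Node_iff)
  have cpy: "composable C x p y" using fx fy c1 by (auto simp: composable_def cplus_def p_def)
  have cqz: "composable C x q z" using fx fz c2 by (auto simp: composable_def cplus_def q_def)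
  have pq: "p < q" by (simp add: p_def q_def)
  note Cy = co_comp[OF co cpy] and Cz = co_comp[OF co cqz]
  have ay: "arity C y \<ge> 2" using cplus_arity[OF co fy(1)] .
  have e1: "Suc (length (A @ us @ M)) = q + arity C y - 1" using fy ay by (simp add: q_def)
  have col1: "outc C z = inc C (comp C x p y) (q + arity C y - 1)"
  proof -
    have "q + arity C y - 1 \<in> {1..arity C x + arity C y - 1}" using cqz ay by (auto simp: composable_def)
    then have "inc C (comp C x p y) (q + arity C y - 1) = inc C x q"
      using Cy pq ay by auto
    then show ?thesis using c2 q_def by simp
  qed
  have col2: "outc C y = inc C (comp C x q z) p"
  proof -
    have "p \<in> {1..arity C x + arity C z - 1}" using cpy cplus_arity[OF co fz(1)] by (auto simp: composable_def)
    then have "inc C (comp C x q z) p = inc C x p" using Cz pq by auto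
    then show ?thesis using c1 p_def by simp
  qed
  have par: "comp C (comp C x p y) (q + arity C y - 1) z = comp C (comp C x q z) p y"
    using co_par[OF co cpy cqz pq] .
  let ?u = "Node (comp C (comp C x p y) (q + arity C y - 1) z) (A @ us @ M @ vs @ B)"
  have s1: "cstep C (Node (comp C x p y) (A @ us @ M @ Node z vs # B)) ?u"
    by (rule cs_root'[where A="A @ us @ M"]) (use col1 e1 in auto)
  have s2: "cstep C (Node (comp C x q z) (A @ Node y us # M @ vs @ B)) ?u"
    unfolding par by (rule cs_root'[where A="A"]) (use col2 p_def in auto)
  show ?thesis using s1 s2 unfolding p_def q_def by blast
qed

lemma rs:
  assumes co: "coloured_operad k C"
    and ft: "ftree C (Node x (A @ Node y (U1 @ Node z vs # U2) # B))"
    and c1: "outc C y = inc C x (Suc (length A))"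
    and c2: "outc C z = inc C y (Suc (length U1))"
  shows "\<exists>u. cstep C (Node (comp C x (Suc (length A)) y) (A @ (U1 @ Node z vs # U2) @ B)) u
          \<and> cstep C (Node x (A @ Node (comp C y (Suc (length U1)) z) (U1 @ vs @ U2) # B)) u"
proof -
  define p where "p = Suc (length A)"
  define r where "r = Suc (length U1)"
  have fx: "x \<in> cplus C" "length (A @ Node y (U1 @ Node z vs # U2) # B) = arity C x"
    and fy: "y \<in> cplus C" "length (U1 @ Node z vs # U2) = arity C y"
    and fz: "z \<in> cplus C" "length vs = arity C z"
    using ft by (auto simp: ftree_Node_iff)
  have cpy: "composable C x p y" using fx fy c1 by (auto simp: composable_def cplus_def p_def)
  have cyz: "composable C y r z" using fy fz c2 by (auto simp: composable_def cplus_def r_def)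
  note Cy = co_comp[OF co cpy] and Cz = co_comp[OF co cyz]
  have ay: "arity C y \<ge> 2" using cplus_arity[OF co fy(1)] .
  have e1: "Suc (length (A @ U1)) = p + r - 1" by (simp add: p_def r_def)
  have col1: "outc C z = inc C (comp C x p y) (p + r - 1)"
  proof -
    have "p + r - 1 \<in> {1..arity C x + arity C y - 1}" using cpy cyz by (auto simp: composable_def)
    moreover have "p + r - 1 < p + arity C y" "\<not> p + r - 1 < p" using cyz by (auto simp: composable_def r_def)
    ultimately have "inc C (comp C x p y) (p + r - 1) = inc C y r"
      using Cy by auto
    then show ?thesis using c2 r_def by simp
  qed
  have col2: "outc C (comp C y r z) = inc C x p" using Cz c1 p_def by simp
  have as: "comp C (comp C x p y) (p + r - 1) z = comp C x p (comp C y r z)"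
    using co_assoc[OF co cpy cyz] .
  let ?u = "Node (comp C x p (comp C y r z)) (A @ U1 @ vs @ U2 @ B)"
  have s1: "cstep C (Node (comp C x p y) (A @ (U1 @ Node z vs # U2) @ B)) ?u"
    unfolding as[symmetric] by (rule cs_root'[where A="A @ U1"]) (use col1 e1 in auto)
  have s2: "cstep C (Node x (A @ Node (comp C y r z) (U1 @ vs @ U2) # B)) ?u"
    by (rule cs_root'[where A="A" and us="U1 @ vs @ U2" and B=B]) (use col2 p_def in auto)
  show ?thesis using s1 s2 unfolding p_def r_def by blast
qed

lemma root_any:
  assumes co: "coloured_operad k C"
    and ft: "ftree C (Node x (A @ Node y us # B))"
    and c1: "outc C y = inc C x (Suc (length A))"
    and st: "cstep C (Node x (A @ Node y us # B)) b"
  shows "Node (comp C x (Suc (length A)) y) (A @ us @ B) = b \<or>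
     (\<exists>u. cstep C (Node (comp C x (Suc (length A)) y) (A @ us @ B)) u \<and> cstep C b u)"
  using st
proof cases
  case (cs_root y' A' us' B')
  note le = cs_root(1) and bb = cs_root(2) and c2 = cs_root(3)
  from split3[OF le] show ?thesis
  proof (elim disjE exE conjE)
    assume "A = A'" "Node y us = Node y' us'" "B = B'"
    then show ?thesis using bb by simp
  next
    fix M assume h: "A' = A @ Node y us # M" "B = M @ Node y' us' # B'"
    have "\<exists>u. cstep C (Node (comp C x (Suc (length A)) y) (A @ us @ M @ Node y' us' # B')) u
          \<and> cstep C (Node (comp C x (Suc (length (A @ Node y us # M))) y') (A @ Node y us # M @ us' @ B')) u"
      by (rule rr[OF co]) (use ft c1 c2 h in simp_all)
    then show ?thesis using bb h by simp
  next
    fix M assume h: "A = A' @ Node y' us' # M" "B' = M @ Node y us # B"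
    have "\<exists>u. cstep C (Node (comp C x (Suc (length A')) y') (A' @ us' @ M @ Node y us # B)) u
          \<and> cstep C (Node (comp C x (Suc (length (A' @ Node y' us' # M))) y) (A' @ Node y' us' # M @ us @ B)) u"
      by (rule rr[OF co]) (use ft c1 c2 h in simp_all)
    then show ?thesis using bb h by auto
  qed
next
  case (cs_ctx t t' A' B')
  note le = cs_ctx(1) and bb = cs_ctx(2) and tt = cs_ctx(3)
  from split3[OF le] show ?thesis
  proof (elim disjE exE conjE)
    assume h: "A = A'" "Node y us = t" "B = B'"
    have st2: "cstep C (Node y us) t'" using tt h by simp
    then show ?thesis
    proof cases
      case (cs_root z U1 vs U2)
      have "\<exists>u. cstep C (Node (comp C x (Suc (length A)) y) (A @ (U1 @ Node z vs # U2) @ B)) u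
          \<and> cstep C (Node x (A @ Node (comp C y (Suc (length U1)) z) (U1 @ vs @ U2) # B)) u"
        by (rule rs[OF co]) (use ft c1 cs_root(1,3) in simp_all)
      then show ?thesis using cs_root(1,2) bb h by simp
    next
      case (cs_ctx w w' U1 U2)
      let ?u = "Node (comp C x (Suc (length A)) y) (A @ U1 @ w' # U2 @ B)"
      have "cstep C (Node (comp C x (Suc (length A)) y) (A @ us @ B)) ?u"
        by (rule cs_ctx'[where A="A @ U1" and t=w]) (use cs_ctx in simp_all)
      moreover have "cstep C b ?u"
        unfolding bb by (rule cs_root'[where A=A and us="U1 @ w' # U2" and B=B]) (use c1 h cs_ctx in simp_all)
      ultimately show ?thesis by blast
    qed
  next
    fix M assume h: "A' = A @ Node y us # M" "B = M @ t # B'"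
    let ?u = "Node (comp C x (Suc (length A)) y) (A @ us @ M @ t' # B')"
    have "cstep C (Node (comp C x (Suc (length A)) y) (A @ us @ B)) ?u"
      by (rule cs_ctx'[where A="A @ us @ M" and t=t]) (use tt h in simp_all)
    moreover have "cstep C b ?u"
      unfolding bb by (rule cs_root'[where A=A and us=us and B="M @ t' # B'"]) (use c1 h in simp_all)
    ultimately show ?thesis by blast
  next
    fix M assume h: "A = A' @ t # M" "B' = M @ Node y us # B"
    let ?u = "Node (comp C x (Suc (length A)) y) (A' @ t' # M @ us @ B)"
    have "cstep C (Node (comp C x (Suc (length A)) y) (A @ us @ B)) ?u"
      by (rule cs_ctx'[where A="A'" and t=t]) (use tt h in simp_all)
    moreover have "cstep C b ?u"
      unfolding bb by (rule cs_root'[where A="A' @ t' # M" and us=us and B=B]) (use c1 h in simp_all)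
    ultimately show ?thesis by blast
  qed
qed

lemma diamond: "cstep C s a \<Longrightarrow> coloured_operad k C \<Longrightarrow> ftree C s \<Longrightarrow> cstep C s b \<Longrightarrow>
   a = b \<or> (\<exists>u. cstep C a u \<and> cstep C b u)"
proof (induction arbitrary: b rule: cstep.induct)
  case (cs_root y x A us B)
  then show ?case using root_any[of k C x A y us B b] by blast
next
  case (cs_ctx t t' x A B)
  note co = cs_ctx.prems(1) and ft = cs_ctx.prems(2) and tt = cs_ctx.hyps
  from cs_ctx.prems(3) show ?case
  proof cases
    case (cs_root y' A' us' B')
    note le = cs_root(1) and bb = cs_root(2) and c2 = cs_root(3)
    have st: "cstep C (Node x (A' @ Node y' us' # B')) (Node x (A @ t' # B))"
      by (rule cs_ctx'[where A=A and t=t]) (use tt le in simp_all)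
    have "Node (comp C x (Suc (length A')) y') (A' @ us' @ B') = Node x (A @ t' # B) \<or>
     (\<exists>u. cstep C (Node (comp C x (Suc (length A')) y') (A' @ us' @ B')) u \<and> cstep C (Node x (A @ t' # B)) u)"
      by (rule root_any[OF co _ c2 st]) (use ft le in simp)
    then show ?thesis unfolding bb by metis
  next
    case (cs_ctx t2 t2' A' B')
    note le = cs_ctx(1) and bb = cs_ctx(2) and tt2 = cs_ctx(3)
    from split3[OF le] show ?thesis
    proof (elim disjE exE conjE)
      assume h: "A = A'" "t = t2" "B = B'"
      have "ftree C t" using ft by (simp add: ftree_Node_iff)
      then have "t' = t2' \<or> (\<exists>u. cstep C t' u \<and> cstep C t2' u)"
        using cs_ctx.IH co tt2 h by simp
      then show ?thesis
      proof
        assume "t' = t2'" then show ?thesis using bb h by simp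
      next
        assume "\<exists>u. cstep C t' u \<and> cstep C t2' u"
        then obtain u where "cstep C t' u" "cstep C t2' u" by blast
        then have "cstep C (Node x (A @ t' # B)) (Node x (A @ u # B))"
          "cstep C b (Node x (A @ u # B))"
          using bb h by (auto intro: cstep.cs_ctx)
        then show ?thesis by blast
      qed
    next
      fix M assume h: "A' = A @ t # M" "B = M @ t2 # B'"
      let ?u = "Node x (A @ t' # M @ t2' # B')"
      have "cstep C (Node x (A @ t' # B)) ?u"
        by (rule cs_ctx'[where A="A @ t' # M" and t=t2]) (use tt2 h in simp_all)
      moreover have "cstep C b ?u"
        unfolding bb by (rule cs_ctx'[where A="A" and t=t]) (use tt h in simp_all)
      ultimately show ?thesis by blast
    next
      fix M assume h: "A = A' @ t2 # M" "B' = M @ t # B"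
      let ?u = "Node x (A' @ t2' # M @ t' # B)"
      have "cstep C (Node x (A @ t' # B)) ?u"
        by (rule cs_ctx'[where A="A'" and t=t2]) (use tt2 h in simp_all)
      moreover have "cstep C b ?u"
        unfolding bb by (rule cs_ctx'[where A="A' @ t2' # M" and t=t]) (use tt h in simp_all)
      ultimately show ?thesis by blast
    qed
  qed
qed

lemma R_strong: assumes co: "coloured_operad k C" shows "strong_confluentp (R C)"
proof (rule strong_confluentpI)
  fix x y z assume xy: "R C x y" and xz: "R C x z"
  then have "y = z \<or> (\<exists>u. cstep C y u \<and> cstep C z u)"
    using diamond[of C x y k z] co by (auto simp: R_def)
  moreover have fy: "ftree C y" "ftree C z" using xy xz co R_ftree by blast+
  ultimately show "\<exists>u. (R C)\<^sup>*\<^sup>* y u \<and> (R C)\<^sup>=\<^sup>= z u"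
  proof (elim disjE)
    assume "y = z" then show ?thesis by auto
  next
    assume "\<exists>u. cstep C y u \<and> cstep C z u"
    then obtain u where "cstep C y u" "cstep C z u" by blast
    then have "R C y u" "R C z u" using fy by (auto simp: R_def)
    then show ?thesis by (meson r_into_rtranclp sup2CI)
  qed
qed

lemma R_confl: "coloured_operad k C \<Longrightarrow> (R C)\<^sup>*\<^sup>* x y \<Longrightarrow> (R C)\<^sup>*\<^sup>* x z \<Longrightarrow>
   \<exists>u. (R C)\<^sup>*\<^sup>* y u \<and> (R C)\<^sup>*\<^sup>* z u"
proof -
  assume a: "coloured_operad k C" "(R C)\<^sup>*\<^sup>* x y" "(R C)\<^sup>*\<^sup>* x z"
  have "confluentp (R C)" by (rule strong_confluentp_imp_confluentp[OF R_strong[OF a(1)]])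
  from confluentpD[OF this a(2) a(3)] show ?thesis .
qed

lemma graft_corolla: "1 \<le> i \<Longrightarrow> i \<le> arity C x \<Longrightarrow>
  graft (corolla C x) i s = Node x (replicate (i - 1) Leaf @ s # replicate (arity C x - i) Leaf)"
proof -
  assume i: "1 \<le> i" "i \<le> arity C x"
  have eqrep: "replicate (arity C x) Leaf = replicate (i - 1) Leaf @ Leaf # replicate (arity C x - i) Leaf"
  proof -
    have e: "arity C x = (i - 1) + Suc (arity C x - i)" using i by simp
    show ?thesis by (subst (1) e) (simp only: replicate_add replicate_Suc)
  qed
  have ii: "leaves_list (replicate (i - 1) (Leaf::'a tree)) + 1 = i" using i by simp
  have "graft_list (replicate (i - 1) Leaf @ Leaf # replicate (arity C x - i) Leaf) (leaves_list (replicate (i - 1) (Leaf::'a tree)) + 1) s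
     = replicate (i - 1) Leaf @ graft Leaf 1 s # replicate (arity C x - i) Leaf"
    by (rule graft_list_at) simp_all
  then have "graft_list (replicate (arity C x) Leaf) i s = replicate (i - 1) Leaf @ s # replicate (arity C x - i) Leaf"
    unfolding ii eqrep by simp
  then show ?thesis unfolding corolla_def by simp
qed

lemma env_rel_inv: "env_rel C s t \<Longrightarrow> coloured_operad k C \<Longrightarrow> ftree C s \<and> ftree C t \<and> leaves s = leaves t"
proof (induction rule: env_rel.induct)
  case (env_gen x i y)
  note cc = co_comp[OF env_gen.prems env_gen.hyps(1)]
  have "ftree C (corolla C x)" "ftree C (corolla C y)"
    using env_gen.hyps(2,3) by (auto intro: corolla_ftree)
  then have "ftree C (graft (corolla C x) i (corolla C y))"
    by (rule ftree_graft(1))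
  moreover have "ftree C (corolla C (comp C x i y))"
    by (rule corolla_ftree[OF comp_cplus[OF env_gen.prems env_gen.hyps]])
  moreover have "leaves (graft (corolla C x) i (corolla C y)) = arity C x + arity C y - 1"
    using env_gen.hyps(1) by (subst leaves_graft(1)) (auto simp: composable_def)
  ultimately show ?case using cc by simp
next
  case (env_cong s s' t t' i)
  have h: "ftree C s" "ftree C s'" "leaves s = leaves s'" "ftree C t" "ftree C t'" "leaves t = leaves t'"
    using env_cong.IH env_cong.prems by auto
  have "leaves (graft s i t) = leaves s + leaves t - 1" using env_cong.hyps by (simp add: leaves_graft(1))
  moreover have "leaves (graft s' i t') = leaves s' + leaves t' - 1" using env_cong.hyps h by (simp add: leaves_graft(1))
  ultimately show ?case using h by (simp add: ftree_graft(1))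
next
  case (env_refl t) then show ?case by simp
next
  case (env_sym s t) then show ?case by simp
next
  case (env_trans s t u) then show ?case by simp
qed

lemma R_gen: "coloured_operad k C \<Longrightarrow> composable C x i y \<Longrightarrow> x \<in> cplus C \<Longrightarrow> y \<in> cplus C \<Longrightarrow>
  R C (graft (corolla C x) i (corolla C y)) (corolla C (comp C x i y))"
proof -
  assume co: "coloured_operad k C" and cp: "composable C x i y" and xc: "x \<in> cplus C" and yc: "y \<in> cplus C"
  have i: "1 \<le> i" "i \<le> arity C x" "outc C y = inc C x i" using cp by (auto simp: composable_def)
  note cc = co_comp[OF co cp]
  have "ftree C (corolla C x)" "ftree C (corolla C y)" using xc yc by (auto intro: corolla_ftree)
  then have ft: "ftree C (graft (corolla C x) i (corolla C y))" by (rule ftree_graft(1))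
  have eq: "replicate (arity C (comp C x i y)) Leaf
      = replicate (i - 1) Leaf @ replicate (arity C y) Leaf @ replicate (arity C x - i) (Leaf :: 'a tree)"
  proof -
    have e: "arity C (comp C x i y) = (i - 1) + (arity C y + (arity C x - i))" using cc i by simp
    show ?thesis by (subst e) (simp only: replicate_add)
  qed
  have g: "graft (corolla C x) i (corolla C y) = Node x (replicate (i-1) Leaf @ Node y (replicate (arity C y) Leaf) # replicate (arity C x - i) Leaf)"
    using graft_corolla[OF i(1,2), of "corolla C y"] by (simp only: corolla_def[of C y])
  have c: "corolla C (comp C x i y) = Node (comp C x i y) (replicate (i - 1) Leaf @ replicate (arity C y) Leaf @ replicate (arity C x - i) Leaf)"
    unfolding corolla_def eq ..
  have st: "cstep C (Node x (replicate (i-1) Leaf @ Node y (replicate (arity C y) Leaf) # replicate (arity C x - i) Leaf))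
     (Node (comp C x i y) (replicate (i - 1) Leaf @ replicate (arity C y) Leaf @ replicate (arity C x - i) Leaf))"
    by (rule cs_root'[where A="replicate (i - 1) Leaf" and us="replicate (arity C y) Leaf" and B="replicate (arity C x - i) Leaf"])
       (use i in simp_all)
  show ?thesis unfolding R_def c
  proof (rule conjI)
    show "ftree C (graft (corolla C x) i (corolla C y))" by (rule ft)
    show "cstep C (graft (corolla C x) i (corolla C y)) (Node (comp C x i y) (replicate (i - 1) Leaf @ replicate (arity C y) Leaf @ replicate (arity C x - i) Leaf))"
      unfolding g by (rule st)
  qed
qed

lemma env_join: "env_rel C s t \<Longrightarrow> coloured_operad k C \<Longrightarrow>
   \<exists>u. (R C)\<^sup>*\<^sup>* s u \<and> (R C)\<^sup>*\<^sup>* t u"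
proof (induction rule: env_rel.induct)
  case (env_gen x i y)
  then show ?case using R_gen by (metis r_into_rtranclp rtranclp.rtrancl_refl)
next
  case (env_refl t) then show ?case by blast
next
  case (env_sym s t) then show ?case by blast
next
  case (env_trans s t u)
  then obtain a b where "(R C)\<^sup>*\<^sup>* s a" "(R C)\<^sup>*\<^sup>* t a" "(R C)\<^sup>*\<^sup>* t b" "(R C)\<^sup>*\<^sup>* u b" by blast
  moreover then obtain c where "(R C)\<^sup>*\<^sup>* a c" "(R C)\<^sup>*\<^sup>* b c" using R_confl[OF env_trans.prems] by blast
  ultimately show ?case by (meson rtranclp_trans)
next
  case (env_cong s s' t t' i)
  have inv1: "ftree C s" "ftree C s'" "leaves s = leaves s'" using env_rel_inv[OF env_cong.hyps(1) env_cong.prems] by auto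
  have inv2: "ftree C t" "ftree C t'" using env_rel_inv[OF env_cong.hyps(2) env_cong.prems] by auto
  obtain a where a: "(R C)\<^sup>*\<^sup>* s a" "(R C)\<^sup>*\<^sup>* s' a" using env_cong.IH(1) env_cong.prems by blast
  obtain b where b: "(R C)\<^sup>*\<^sup>* t b" "(R C)\<^sup>*\<^sup>* t' b" using env_cong.IH(2) env_cong.prems by blast
  have la: "leaves a = leaves s" using Rs_leaves[OF a(1)] by simp
  have fa: "ftree C a" using Rs_ftree[OF a(1) env_cong.prems inv1(1)] .
  have "(R C)\<^sup>*\<^sup>* (graft s i t) (graft a i t)" using lift1s[OF a(1) env_cong.prems inv2(1)] .
  also have "(R C)\<^sup>*\<^sup>* (graft a i t) (graft a i b)"
    using lift2s[OF b(1) env_cong.prems fa] env_cong.hyps la by simp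
  finally have 1: "(R C)\<^sup>*\<^sup>* (graft s i t) (graft a i b)" .
  have "(R C)\<^sup>*\<^sup>* (graft s' i t') (graft a i t')" using lift1s[OF a(2) env_cong.prems inv2(2)] .
  also have "(R C)\<^sup>*\<^sup>* (graft a i t') (graft a i b)"
    using lift2s[OF b(2) env_cong.prems fa] env_cong.hyps la by simp
  finally have 2: "(R C)\<^sup>*\<^sup>* (graft s' i t') (graft a i b)" .
  show ?case using 1 2 by blast
qed


fun fillg :: "'a tree \<Rightarrow> 'a tree list \<Rightarrow> nat \<Rightarrow> 'a tree" where
  "fillg a [] p = a"
| "fillg a (t # ts) p = fillg (graft a p t) ts (p + leaves t)"

lemma fill_nodes: "length ts = m \<Longrightarrow>
  fillg (Node z (L @ replicate m Leaf @ Rr)) ts (Suc (leaves_list L)) = Node z (L @ ts @ Rr)"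
proof (induction ts arbitrary: L m)
  case Nil then show ?case by simp
next
  case (Cons t ts)
  then obtain m' where m: "m = Suc m'" "length ts = m'" by auto
  have g: "graft_list (L @ Leaf # (replicate m' Leaf @ Rr)) (leaves_list L + 1) t = L @ graft Leaf 1 t # (replicate m' Leaf @ Rr)"
    by (rule graft_list_at) simp_all
  have "graft (Node z (L @ replicate m Leaf @ Rr)) (Suc (leaves_list L)) t = Node z ((L @ [t]) @ replicate m' Leaf @ Rr)"
    using g unfolding m by simp
  then have "fillg (Node z (L @ replicate m Leaf @ Rr)) (t # ts) (Suc (leaves_list L))
      = fillg (Node z ((L @ [t]) @ replicate m' Leaf @ Rr)) ts (Suc (leaves_list (L @ [t])))"
    by simp
  also have "\<dots> = Node z ((L @ [t]) @ ts @ Rr)" using Cons.IH m(2) by blast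
  finally show ?case by simp
qed

lemma fill_child: "1 \<le> q \<Longrightarrow> q + length ts \<le> leaves c + 1 \<Longrightarrow>
  fillg (Node z (L @ c # Rr)) ts (leaves_list L + q) = Node z (L @ fillg c ts q # Rr)"
proof (induction ts arbitrary: c q)
  case Nil then show ?case by simp
next
  case (Cons t ts)
  have q: "q \<le> leaves c" using Cons.prems by simp
  have g: "graft (Node z (L @ c # Rr)) (leaves_list L + q) t = Node z (L @ graft c q t # Rr)"
    using graft_list_at[OF Cons.prems(1) q] by simp
  have lg: "leaves (graft c q t) = leaves c + leaves t - 1" using leaves_graft(1)[OF Cons.prems(1) q] .
  have "fillg (Node z (L @ c # Rr)) (t # ts) (leaves_list L + q)
     = fillg (Node z (L @ graft c q t # Rr)) ts (leaves_list L + (q + leaves t))"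
    using g by (simp add: add.assoc)
  also have "\<dots> = Node z (L @ fillg (graft c q t) ts (q + leaves t) # Rr)"
    by (rule Cons.IH) (use Cons.prems lg in auto)
  finally show ?case by simp
qed

lemma fill_cong: "env_rel C a a' \<Longrightarrow> coloured_operad k C \<Longrightarrow> (\<forall>t\<in>set ts. ftree C t) \<Longrightarrow> 1 \<le> p \<Longrightarrow>
   p + length ts \<le> leaves a + 1 \<Longrightarrow> env_rel C (fillg a ts p) (fillg a' ts p)"
proof (induction ts arbitrary: a a' p)
  case Nil then show ?case by simp
next
  case (Cons t ts)
  have p: "p \<le> leaves a" using Cons.prems by simp
  have e: "env_rel C (graft a p t) (graft a' p t)"
    by (rule env_cong[OF Cons.prems(1) env_refl Cons.prems(4) p]) (use Cons.prems in simp)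
  have lg: "leaves (graft a p t) = leaves a + leaves t - 1" using leaves_graft(1)[OF Cons.prems(4) p] .
  have "env_rel C (fillg (graft a p t) ts (p + leaves t)) (fillg (graft a' p t) ts (p + leaves t))"
    by (rule Cons.IH[OF e Cons.prems(2)]) (use Cons.prems lg in auto)
  then show ?case by simp
qed

lemma root_env:
  assumes co: "coloured_operad k C"
    and ft: "ftree C (Node x (A @ Node y us # B))"
    and c1: "outc C y = inc C x (Suc (length A))"
  shows "env_rel C (Node x (A @ Node y us # B)) (Node (comp C x (Suc (length A)) y) (A @ us @ B))"
proof -
  define p where "p = Suc (length A)"
  define c where "c = comp C x p y"
  have fx: "x \<in> cplus C" "length A + length B + 1 = arity C x"
    and fy: "y \<in> cplus C" "length us = arity C y"
    and fA: "\<forall>t\<in>set A. ftree C t" and fB: "\<forall>t\<in>set B. ftree C t" and fus: "\<forall>t\<in>set us. ftree C t"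
    using ft by (auto simp: ftree_Node_iff)
  have cp: "composable C x p y" using fx fy c1 by (auto simp: composable_def cplus_def p_def)
  note cc = co_comp[OF co cp]
  have ac: "arity C c = length A + (arity C y + length B)" using cc fx unfolding c_def by simp
  have E0: "env_rel C (graft (corolla C x) p (corolla C y)) (corolla C c)"
    unfolding c_def by (rule env_gen[OF cp fx(1) fy(1)])
  have g0: "graft (corolla C x) p (corolla C y) = Node x (replicate (length A) Leaf @ corolla C y # replicate (length B) Leaf)"
    using graft_corolla[of p C x "corolla C y"] fx by (simp add: p_def)
  have c0: "corolla C c = Node c (replicate (length A) Leaf @ replicate (arity C y) Leaf @ replicate (length B) Leaf)"
    unfolding corolla_def ac by (simp only: replicate_add)
  have E1: "env_rel C (Node x (A @ corolla C y # replicate (length B) Leaf)) (Node c (A @ replicate (arity C y) Leaf @ replicate (length B) Leaf))"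
  proof -
    have "env_rel C (fillg (graft (corolla C x) p (corolla C y)) A 1) (fillg (corolla C c) A 1)"
      by (rule fill_cong[OF E0 co fA]) (use fx in \<open>simp_all add: g0\<close>)
    moreover have "fillg (graft (corolla C x) p (corolla C y)) A 1 = Node x (A @ corolla C y # replicate (length B) Leaf)"
      unfolding g0 using fill_nodes[of A "length A" x "[]" "corolla C y # replicate (length B) Leaf"] by simp
    moreover have "fillg (corolla C c) A 1 = Node c (A @ replicate (arity C y) Leaf @ replicate (length B) Leaf)"
      unfolding c0 using fill_nodes[of A "length A" c "[]" "replicate (arity C y) Leaf @ replicate (length B) Leaf"] by simp
    ultimately show ?thesis by simp
  qed
  have E2: "env_rel C (Node x (A @ corolla C y # B)) (Node c (A @ replicate (arity C y) Leaf @ B))"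
  proof -
    have "env_rel C (fillg (Node x (A @ corolla C y # replicate (length B) Leaf)) B (Suc (leaves_list A + arity C y)))
       (fillg (Node c (A @ replicate (arity C y) Leaf @ replicate (length B) Leaf)) B (Suc (leaves_list A + arity C y)))"
      by (rule fill_cong[OF E1 co fB]) simp_all
    moreover have "fillg (Node x (A @ corolla C y # replicate (length B) Leaf)) B (Suc (leaves_list A + arity C y))
       = Node x (A @ corolla C y # B)"
      using fill_nodes[of B "length B" x "A @ [corolla C y]" "[]"] by simp
    moreover have "fillg (Node c (A @ replicate (arity C y) Leaf @ replicate (length B) Leaf)) B (Suc (leaves_list A + arity C y))
       = Node c (A @ replicate (arity C y) Leaf @ B)"
      using fill_nodes[of B "length B" c "A @ replicate (arity C y) Leaf" "[]"] by simp
    ultimately show ?thesis by simp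
  qed
  have E3: "env_rel C (Node x (A @ Node y us # B)) (Node c (A @ us @ B))"
  proof -
    have "env_rel C (fillg (Node x (A @ corolla C y # B)) us (leaves_list A + 1))
       (fillg (Node c (A @ replicate (arity C y) Leaf @ B)) us (leaves_list A + 1))"
      by (rule fill_cong[OF E2 co fus]) (use fy in simp_all)
    moreover have "fillg (Node x (A @ corolla C y # B)) us (leaves_list A + 1) = Node x (A @ fillg (corolla C y) us 1 # B)"
      by (rule fill_child) (use fy in simp_all)
    moreover have "fillg (corolla C y) us 1 = Node y us"
      using fill_nodes[of us "arity C y" y "[]" "[]"] fy by (simp add: corolla_def)
    moreover have "fillg (Node c (A @ replicate (arity C y) Leaf @ B)) us (leaves_list A + 1) = Node c (A @ us @ B)"
      using fill_nodes[of us "arity C y" c A B] fy by simp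
    ultimately show ?thesis by simp
  qed
  then show ?thesis unfolding c_def p_def .
qed

lemma cstep_env: "cstep C s t \<Longrightarrow> coloured_operad k C \<Longrightarrow> ftree C s \<Longrightarrow> env_rel C s t"
proof (induction rule: cstep.induct)
  case (cs_root y x A us B)
  then show ?case using root_env[of k C x A y us B] by simp
next
  case (cs_ctx t t' x A B)
  have ft: "ftree C t" and fN: "ftree C (Node x (A @ Leaf # B))"
    using cs_ctx.prems(2) by (auto simp: ftree_Node_iff intro: ftree.intros)
  have e: "env_rel C t t'" using cs_ctx.IH cs_ctx.prems(1) ft by blast
  have g: "\<And>u. graft (Node x (A @ Leaf # B)) (leaves_list A + 1) u = Node x (A @ u # B)"
    using graft_list_at[of 1 Leaf A B] by simp
  have "env_rel C (graft (Node x (A @ Leaf # B)) (leaves_list A + 1) t) (graft (Node x (A @ Leaf # B)) (leaves_list A + 1) t')"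
    by (rule env_cong[OF env_refl[OF fN] e]) simp_all
  then show ?case unfolding g .
qed

lemma Rs_env: "(R C)\<^sup>*\<^sup>* s t \<Longrightarrow> coloured_operad k C \<Longrightarrow> ftree C s \<Longrightarrow> env_rel C s t"
proof (induction rule: rtranclp_induct)
  case base then show ?case by (simp add: env_refl)
next
  case (step a b)
  then have "env_rel C a b" using cstep_env by (auto simp: R_def)
  then show ?case using step env_trans by blast
qed

lemma leaves_map[simp]: "leaves (map_tree f t) = leaves t"
proof (induction t)
  case Leaf then show ?case by simp
next
  case (Node x ts)
  have "\<forall>t\<in>set ts. leaves (map_tree f t) = leaves t" using Node by blast
  then have "leaves_list (map (map_tree f) ts) = leaves_list ts" by (induction ts) auto
  then show ?case by simp
qed

lemma leaves_list_map[simp]: "leaves_list (map (map_tree f) ts) = leaves_list ts"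
  by (induction ts) auto

lemma map_graft:
  "map_tree f (graft s i t) = graft (map_tree f s) i (map_tree f t)"
  "map (map_tree f) (graft_list ts i t) = graft_list (map (map_tree f) ts) i (map_tree f t)"
  by (induction s i t and ts i t rule: graft_graft_list.induct) auto

lemma morph_carrier: "coperad_morphism C1 C2 \<phi> \<Longrightarrow> x \<in> carrier C1 \<Longrightarrow> \<phi> x \<in> carrier C2 \<and> arity C2 (\<phi> x) = arity C1 x"
  unfolding coperad_morphism_def by blast

lemma morph_comp: "coperad_morphism C1 C2 \<phi> \<Longrightarrow> composable C1 x i y \<Longrightarrow>
    composable C2 (\<phi> x) i (\<phi> y) \<and> \<phi> (comp C1 x i y) = comp C2 (\<phi> x) i (\<phi> y)"
  unfolding coperad_morphism_def by blast

lemma morph_cplus: "coperad_morphism C1 C2 \<phi> \<Longrightarrow> x \<in> cplus C1 \<Longrightarrow> \<phi> x \<in> cplus C2"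
  using morph_carrier[of C1 C2 \<phi> x] by (auto simp: cplus_def)

lemma map_corolla: "coperad_morphism C1 C2 \<phi> \<Longrightarrow> x \<in> carrier C1 \<Longrightarrow>
   map_tree \<phi> (corolla C1 x) = corolla C2 (\<phi> x)"
  using morph_carrier[of C1 C2 \<phi> x] by (simp add: corolla_def)

lemma map_ftree: "ftree C1 t \<Longrightarrow> coperad_morphism C1 C2 \<phi> \<Longrightarrow> ftree C2 (map_tree \<phi> t)"
proof (induction rule: ftree.induct)
  case ftree_Leaf then show ?case by (simp add: ftree.ftree_Leaf)
next
  case (ftree_Node x ts)
  have "\<phi> x \<in> cplus C2" using morph_cplus[OF ftree_Node.prems ftree_Node.hyps(1)] .
  moreover have "arity C2 (\<phi> x) = arity C1 x" using morph_carrier[OF ftree_Node.prems] ftree_Node.hyps(1)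
    by (simp add: cplus_def)
  ultimately show ?case using ftree_Node by (auto simp: ftree_Node_iff)
qed

lemma map_env: "env_rel C1 s t \<Longrightarrow> coloured_operad k C1 \<Longrightarrow> coperad_morphism C1 C2 \<phi> \<Longrightarrow>
   env_rel C2 (map_tree \<phi> s) (map_tree \<phi> t)"
proof (induction rule: env_rel.induct)
  case (env_gen x i y)
  note mc = morph_comp[OF env_gen.prems(2) env_gen.hyps(1)]
  have cc: "comp C1 x i y \<in> carrier C1" using co_comp[OF env_gen.prems(1) env_gen.hyps(1)] by blast
  have xy: "x \<in> carrier C1" "y \<in> carrier C1" using env_gen.hyps by (auto simp: cplus_def)
  have "env_rel C2 (graft (corolla C2 (\<phi> x)) i (corolla C2 (\<phi> y))) (corolla C2 (comp C2 (\<phi> x) i (\<phi> y)))"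
    by (rule env_rel.env_gen) (use mc morph_cplus env_gen in auto)
  then show ?case
    using map_corolla[OF env_gen.prems(2) cc] map_corolla[OF env_gen.prems(2) xy(1)] map_corolla[OF env_gen.prems(2) xy(2)] mc
    by (simp add: map_graft)
next
  case (env_refl t) then show ?case using map_ftree env_rel.env_refl by blast
next
  case (env_sym s t) then show ?case using env_rel.env_sym by blast
next
  case (env_trans s t u) then show ?case using env_rel.env_trans by blast
next
  case (env_cong s s' t t' i)
  then show ?case by (simp add: map_graft env_rel.env_cong)
qed

lemma class_eq: "env_rel C s t \<Longrightarrow> env_class C s = env_class C t"
proof (rule set_eqI)
  fix u assume st: "env_rel C s t"
  show "u \<in> env_class C s \<longleftrightarrow> u \<in> env_class C t"
  proof
    assume "u \<in> env_class C s"
    then have "env_rel C s u" by (simp add: env_class_def)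
    then have "env_rel C t u" using env_rel.env_trans[OF env_rel.env_sym[OF st]] by blast
    then show "u \<in> env_class C t" by (simp add: env_class_def)
  next
    assume "u \<in> env_class C t"
    then have "env_rel C t u" by (simp add: env_class_def)
    then have "env_rel C s u" using env_rel.env_trans[OF st] by blast
    then show "u \<in> env_class C s" by (simp add: env_class_def)
  qed
qed

lemma class_mem: "ftree C t \<Longrightarrow> t \<in> env_class C t"
  by (simp add: env_class_def env_rel.env_refl)

lemma rep_rel: "ftree C t \<Longrightarrow> env_rel C t (SOME u. u \<in> env_class C t)"
proof -
  assume "ftree C t"
  then have "t \<in> env_class C t" by (rule class_mem)
  then have "(SOME u. u \<in> env_class C t) \<in> env_class C t" by (rule someI)
  then show ?thesis by (simp add: env_class_def)
qed

lemma class_rep: "ftree C t \<Longrightarrow> env_class C (SOME u. u \<in> env_class C t) = env_class C t"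
  using class_eq[OF env_rel.env_sym[OF rep_rel]] by blast

lemma rep_props: "coloured_operad k C \<Longrightarrow> ftree C t \<Longrightarrow>
   ftree C (SOME u. u \<in> env_class C t) \<and> leaves (SOME u. u \<in> env_class C t) = leaves t"
  using env_rel_inv[OF rep_rel] by metis

lemma oarity_class: "coloured_operad k C \<Longrightarrow> ftree C t \<Longrightarrow> oarity (Env C) (env_class C t) = leaves t"
  using rep_props[of k C t] by (simp add: Env_def)

lemma ocarrier_iff: "X \<in> ocarrier (Env C) \<longleftrightarrow> (\<exists>t. ftree C t \<and> X = env_class C t)"
  by (auto simp: Env_def)

lemma ounit_Env: "ounit (Env C) = env_class C Leaf"
  by (simp add: Env_def)

lemma ocomp_class: "coloured_operad k C \<Longrightarrow> ftree C a \<Longrightarrow> ftree C b \<Longrightarrow> 1 \<le> i \<Longrightarrow> i \<le> leaves a \<Longrightarrow>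
   ocomp (Env C) (env_class C a) i (env_class C b) = env_class C (graft a i b)"
proof -
  assume co: "coloured_operad k C" and fa: "ftree C a" and fb: "ftree C b" and i: "1 \<le> i" "i \<le> leaves a"
  have la: "i \<le> leaves (SOME u. u \<in> env_class C a)" using rep_props[OF co fa] i by simp
  have "env_rel C (graft (SOME u. u \<in> env_class C a) i (SOME u. u \<in> env_class C b)) (graft a i b)"
    by (rule env_rel.env_cong[OF env_rel.env_sym[OF rep_rel[OF fa]] env_rel.env_sym[OF rep_rel[OF fb]] i(1) la])
  then show ?thesis by (simp add: Env_def class_eq)
qed

lemma env_map_class: "coloured_operad k C1 \<Longrightarrow> coperad_morphism C1 C2 \<phi> \<Longrightarrow> ftree C1 t \<Longrightarrow>
   env_map C2 \<phi> (env_class C1 t) = env_class C2 (map_tree \<phi> t)"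
proof -
  assume co: "coloured_operad k C1" and m: "coperad_morphism C1 C2 \<phi>" and ft: "ftree C1 t"
  have "env_rel C2 (map_tree \<phi> t) (map_tree \<phi> (SOME u. u \<in> env_class C1 t))"
    by (rule map_env[OF rep_rel[OF ft] co m])
  then show ?thesis unfolding env_map_def by (simp add: class_eq)
qed

lemma env_hom: "coloured_operad k C1 \<Longrightarrow> coloured_operad k C2 \<Longrightarrow> coperad_morphism C1 C2 \<phi> \<Longrightarrow>
   operad_hom (Env C1) (Env C2) (env_map C2 \<phi>)"
proof -
  assume co1: "coloured_operad k C1" and co2: "coloured_operad k C2" and m: "coperad_morphism C1 C2 \<phi>"
  have A: "env_map C2 \<phi> X \<in> ocarrier (Env C2) \<and> oarity (Env C2) (env_map C2 \<phi> X) = oarity (Env C1) X"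
    if hX: "X \<in> ocarrier (Env C1)" for X
  proof -
    obtain t where t: "ftree C1 t" "X = env_class C1 t" using hX by (auto simp: ocarrier_iff)
    have ft2: "ftree C2 (map_tree \<phi> t)" using map_ftree[OF t(1) m] .
    show ?thesis using t ft2 env_map_class[OF co1 m t(1)] oarity_class[OF co2 ft2] oarity_class[OF co1 t(1)]
      by (auto simp: ocarrier_iff)
  qed
  have B: "env_map C2 \<phi> (ounit (Env C1)) = ounit (Env C2)"
    using env_map_class[OF co1 m ftree.ftree_Leaf] by (simp add: ounit_Env)
  have C: "env_map C2 \<phi> (ocomp (Env C1) X i Y) = ocomp (Env C2) (env_map C2 \<phi> X) i (env_map C2 \<phi> Y)"
    if hX: "X \<in> ocarrier (Env C1)" and hY: "Y \<in> ocarrier (Env C1)" and hi: "i \<in> {1..oarity (Env C1) X}" for X Y i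
  proof -
    obtain s where s: "ftree C1 s" "X = env_class C1 s" using hX by (auto simp: ocarrier_iff)
    obtain t where t: "ftree C1 t" "Y = env_class C1 t" using hY by (auto simp: ocarrier_iff)
    have i: "1 \<le> i" "i \<le> leaves s" using hi oarity_class[OF co1 s(1)] s by auto
    have fs2: "ftree C2 (map_tree \<phi> s)" "ftree C2 (map_tree \<phi> t)" using map_ftree m s t by blast+
    have "env_map C2 \<phi> (ocomp (Env C1) X i Y) = env_class C2 (map_tree \<phi> (graft s i t))"
      using ocomp_class[OF co1 s(1) t(1) i] env_map_class[OF co1 m ftree_graft(1)[OF s(1) t(1)]] s t by simp
    also have "\<dots> = ocomp (Env C2) (env_class C2 (map_tree \<phi> s)) i (env_class C2 (map_tree \<phi> t))"
      using ocomp_class[OF co2 fs2 i(1)] i(2) by (simp add: map_graft)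
    finally show ?thesis using env_map_class[OF co1 m s(1)] env_map_class[OF co1 m t(1)] s t by simp
  qed
  show ?thesis unfolding operad_hom_def using A B C by blast
qed

lemma fill_G:
  assumes co1: "coloured_operad k C1" and co2: "coloured_operad k C2" and m: "coperad_morphism C1 C2 \<phi>"
    and hG: "operad_hom (Env C1) (Env C2) G"
  shows "ftree C1 a \<Longrightarrow> G (env_class C1 a) = env_class C2 (map_tree \<phi> a) \<Longrightarrow>
    \<forall>t\<in>set ts. ftree C1 t \<and> G (env_class C1 t) = env_class C2 (map_tree \<phi> t) \<Longrightarrow>
    1 \<le> p \<Longrightarrow> p + length ts \<le> leaves a + 1 \<Longrightarrow>
    G (env_class C1 (fillg a ts p)) = env_class C2 (map_tree \<phi> (fillg a ts p))"
proof (induction ts arbitrary: a p)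
  case Nil then show ?case by simp
next
  case (Cons t ts)
  have ft: "ftree C1 t" and Gt: "G (env_class C1 t) = env_class C2 (map_tree \<phi> t)" using Cons.prems(3) by auto
  have p: "p \<le> leaves a" using Cons.prems by simp
  have hom3: "\<forall>X\<in>ocarrier (Env C1). \<forall>Y\<in>ocarrier (Env C1). \<forall>i\<in>{1..oarity (Env C1) X}.
        G (ocomp (Env C1) X i Y) = ocomp (Env C2) (G X) i (G Y)"
    using hG unfolding operad_hom_def by blast
  have inA: "env_class C1 a \<in> ocarrier (Env C1)" "env_class C1 t \<in> ocarrier (Env C1)"
    using Cons.prems(1) ft by (auto simp: ocarrier_iff)
  have pi: "p \<in> {1..oarity (Env C1) (env_class C1 a)}" using oarity_class[OF co1 Cons.prems(1)] Cons.prems(4) p by simp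
  have fm: "ftree C2 (map_tree \<phi> a)" "ftree C2 (map_tree \<phi> t)" using map_ftree m Cons.prems(1) ft by blast+
  have "G (env_class C1 (graft a p t)) = G (ocomp (Env C1) (env_class C1 a) p (env_class C1 t))"
    using ocomp_class[OF co1 Cons.prems(1) ft Cons.prems(4) p] by simp
  also have "\<dots> = ocomp (Env C2) (G (env_class C1 a)) p (G (env_class C1 t))"
    using hom3 inA pi by blast
  also have "\<dots> = env_class C2 (graft (map_tree \<phi> a) p (map_tree \<phi> t))"
    unfolding Cons.prems(2) Gt using ocomp_class[OF co2 fm Cons.prems(4)] p by simp
  finally have h1: "G (env_class C1 (graft a p t)) = env_class C2 (map_tree \<phi> (graft a p t))"
    by (simp add: map_graft)
  have lg: "leaves (graft a p t) = leaves a + leaves t - 1" using leaves_graft(1)[OF Cons.prems(4) p] .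
  have "G (env_class C1 (fillg (graft a p t) ts (p + leaves t))) = env_class C2 (map_tree \<phi> (fillg (graft a p t) ts (p + leaves t)))"
    by (rule Cons.IH[OF ftree_graft(1)[OF Cons.prems(1) ft] h1]) (use Cons.prems lg in auto)
  then show ?case by simp
qed

lemma unique:
  assumes co1: "coloured_operad k C1" and co2: "coloured_operad k C2" and m: "coperad_morphism C1 C2 \<phi>"
    and hG: "operad_hom (Env C1) (Env C2) G"
    and hc: "\<forall>x\<in>cplus C1. G (env_class C1 (corolla C1 x)) = env_class C2 (corolla C2 (\<phi> x))"
  shows "ftree C1 t \<Longrightarrow> G (env_class C1 t) = env_class C2 (map_tree \<phi> t)"
proof (induction rule: ftree.induct)
  case ftree_Leaf
  have "G (ounit (Env C1)) = ounit (Env C2)" using hG unfolding operad_hom_def by blast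
  then show ?case by (simp add: ounit_Env)
next
  case (ftree_Node x ts)
  have xc: "x \<in> carrier C1" using ftree_Node.hyps(1) by (simp add: cplus_def)
  have fc: "ftree C1 (corolla C1 x)" using corolla_ftree[OF ftree_Node.hyps(1)] .
  have Gc: "G (env_class C1 (corolla C1 x)) = env_class C2 (map_tree \<phi> (corolla C1 x))"
    using hc ftree_Node.hyps(1) map_corolla[OF m xc] by simp
  have eqN: "fillg (corolla C1 x) ts 1 = Node x ts"
    using fill_nodes[of ts "arity C1 x" x "[]" "[]"] ftree_Node.hyps(2) by (simp add: corolla_def)
  have "G (env_class C1 (fillg (corolla C1 x) ts 1)) = env_class C2 (map_tree \<phi> (fillg (corolla C1 x) ts 1))"
    by (rule fill_G[OF co1 co2 m hG fc Gc]) (use ftree_Node in auto)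
  then show ?case unfolding eqN .
qed

lemma morph_compose: "coperad_morphism C1 C2 \<phi> \<Longrightarrow> coperad_morphism C2 C3 \<psi> \<Longrightarrow> coperad_morphism C1 C3 (\<psi> \<circ> \<phi>)"
proof -
  assume m1: "coperad_morphism C1 C2 \<phi>" and m2: "coperad_morphism C2 C3 \<psi>"
  show ?thesis unfolding coperad_morphism_def
  proof (intro conjI ballI allI impI)
    fix x assume "x \<in> carrier C1"
    then show "(\<psi> \<circ> \<phi>) x \<in> carrier C3" "arity C3 ((\<psi> \<circ> \<phi>) x) = arity C1 x"
      using morph_carrier[OF m1, of x] morph_carrier[OF m2, of "\<phi> x"] by auto
  next
    fix x i y assume c: "composable C1 x i y"
    note a = morph_comp[OF m1 c]
    note b = morph_comp[OF m2 conjunct1[OF a]]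
    show "composable C3 ((\<psi> \<circ> \<phi>) x) i ((\<psi> \<circ> \<phi>) y)" using b by simp
    show "(\<psi> \<circ> \<phi>) (comp C1 x i y) = comp C3 ((\<psi> \<circ> \<phi>) x) i ((\<psi> \<circ> \<phi>) y)" using a b by simp
  qed
qed

lemma co_units: "coloured_operad k C \<Longrightarrow> c \<in> {1..k} \<Longrightarrow>
   cunit C c \<in> carrier C \<and> arity C (cunit C c) = 1 \<and> outc C (cunit C c) = c \<and> inc C (cunit C c) 1 = c"
  unfolding coloured_operad_def apply (elim conjE) apply (thin_tac "_ = cunit C ` _") by blast

lemma co_unitset: "coloured_operad k C \<Longrightarrow> {x\<in>carrier C. arity C x = 1} = cunit C ` {1..k}"
  unfolding coloured_operad_def by (elim conjE)

lemma co_colours: "coloured_operad k C \<Longrightarrow> x \<in> carrier C \<Longrightarrow>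
   outc C x \<in> {1..k} \<and> (\<forall>i\<in>{1..arity C x}. inc C x i \<in> {1..k})"
  unfolding coloured_operad_def apply (elim conjE) apply (thin_tac "_ = cunit C ` _") by blast

lemma unit_of: "coloured_operad k C \<Longrightarrow> u \<in> carrier C \<Longrightarrow> arity C u = 1 \<Longrightarrow> \<exists>c\<in>{1..k}. u = cunit C c"
proof -
  assume co: "coloured_operad k C" and u: "u \<in> carrier C" "arity C u = 1"
  then have "u \<in> {x\<in>carrier C. arity C x = 1}" by simp
  then show ?thesis unfolding co_unitset[OF co] by blast
qed

lemma unit_io: "coloured_operad k C \<Longrightarrow> u \<in> carrier C \<Longrightarrow> arity C u = 1 \<Longrightarrow> inc C u 1 = outc C u"
  using unit_of co_units by metis

lemma unit_inj: "coloured_operad k C \<Longrightarrow> u \<in> carrier C \<Longrightarrow> arity C u = 1 \<Longrightarrow>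
   u' \<in> carrier C \<Longrightarrow> arity C u' = 1 \<Longrightarrow> outc C u = outc C u' \<Longrightarrow> u = u'"
  using unit_of co_units by metis

lemma refl_col:
  assumes co1: "coloured_operad k C1" and co2: "coloured_operad k C2" and m: "coperad_morphism C1 C2 \<phi>"
    and inj: "inj_on \<phi> (carrier C1)"
    and x: "x \<in> carrier C1" and y: "y \<in> carrier C1" and j: "1 \<le> j" "j \<le> arity C1 x"
    and col: "outc C2 (\<phi> y) = inc C2 (\<phi> x) j"
  shows "outc C1 y = inc C1 x j"
proof -
  define c where "c = outc C1 y"
  define d where "d = inc C1 x j"
  have cd: "c \<in> {1..k}" "d \<in> {1..k}" using co_colours[OF co1 x] co_colours[OF co1 y] j by (auto simp: c_def d_def)
  note uc = co_units[OF co1 cd(1)] and ud = co_units[OF co1 cd(2)]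
  have "composable C1 (cunit C1 c) 1 y" using uc y by (simp add: composable_def c_def)
  then have a: "outc C2 (\<phi> y) = inc C2 (\<phi> (cunit C1 c)) 1" using morph_comp[OF m] by (simp add: composable_def)
  have "composable C1 x j (cunit C1 d)" using ud x j by (simp add: composable_def d_def)
  then have b: "outc C2 (\<phi> (cunit C1 d)) = inc C2 (\<phi> x) j" using morph_comp[OF m] by (simp add: composable_def)
  have pc: "\<phi> (cunit C1 c) \<in> carrier C2" "arity C2 (\<phi> (cunit C1 c)) = 1" using morph_carrier[OF m] uc by auto
  have pd: "\<phi> (cunit C1 d) \<in> carrier C2" "arity C2 (\<phi> (cunit C1 d)) = 1" using morph_carrier[OF m] ud by auto
  have "outc C2 (\<phi> (cunit C1 c)) = outc C2 (\<phi> (cunit C1 d))"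
    using a b col unit_io[OF co2 pc] by simp
  then have "\<phi> (cunit C1 c) = \<phi> (cunit C1 d)" using unit_inj[OF co2 pc pd] by blast
  then have "cunit C1 c = cunit C1 d" using inj uc ud by (meson inj_onD)
  then have "c = d" using uc ud by metis
  then show ?thesis by (simp add: c_def d_def)
qed

lemma cstep_reflect:
  assumes co1: "coloured_operad k C1" and co2: "coloured_operad k C2" and m: "coperad_morphism C1 C2 \<phi>"
    and inj: "inj_on \<phi> (carrier C1)"
  shows "cstep C2 v u \<Longrightarrow> v = map_tree \<phi> s \<Longrightarrow> ftree C1 s \<Longrightarrow> \<exists>s'. cstep C1 s s' \<and> u = map_tree \<phi> s'"
proof (induction arbitrary: s rule: cstep.induct)
  case (cs_root y2 x2 A2 us2 B2)
  obtain x ts where s: "s = Node x ts" using cs_root.prems(1) by (cases s) auto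
  have x2: "x2 = \<phi> x" and mts: "map (map_tree \<phi>) ts = A2 @ Node y2 us2 # B2" using cs_root.prems(1) s by auto
  obtain A V where AV: "ts = A @ V" "A2 = map (map_tree \<phi>) A" "Node y2 us2 # B2 = map (map_tree \<phi>) V"
    using mts by (auto simp: map_eq_append_conv)
  obtain t0 B where tB: "V = t0 # B" "map_tree \<phi> t0 = Node y2 us2" "B2 = map (map_tree \<phi>) B"
    using AV(3) by (auto simp: map_eq_Cons_conv)
  obtain y us where t0: "t0 = Node y us" using tB(2) by (cases t0) auto
  have y2: "y2 = \<phi> y" and us2: "us2 = map (map_tree \<phi>) us" using tB(2) t0 by auto
  have fts: "ftree C1 (Node x (A @ Node y us # B))" using cs_root.prems(2) s AV tB t0 by simp
  then have fx: "x \<in> cplus C1" "length A + length B + 1 = arity C1 x" and fy: "y \<in> cplus C1"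
    by (auto simp: ftree_Node_iff)
  have col: "outc C1 y = inc C1 x (Suc (length A))"
    by (rule refl_col[OF co1 co2 m inj]) (use fx fy cs_root.hyps x2 y2 AV in \<open>auto simp: cplus_def\<close>)
  have cp: "composable C1 x (Suc (length A)) y" using fx fy col by (auto simp: composable_def cplus_def)
  have "cstep C1 s (Node (comp C1 x (Suc (length A)) y) (A @ us @ B))"
    using cstep.cs_root[OF col] s AV tB t0 by simp
  moreover have "Node (comp C2 x2 (Suc (length A2)) y2) (A2 @ us2 @ B2) = map_tree \<phi> (Node (comp C1 x (Suc (length A)) y) (A @ us @ B))"
    using morph_comp[OF m cp] x2 y2 us2 AV tB by simp
  ultimately show ?case by blast
next
  case (cs_ctx t2 t2' x2 A2 B2)
  obtain x ts where s: "s = Node x ts" using cs_ctx.prems(1) by (cases s) auto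
  have x2: "x2 = \<phi> x" and mts: "map (map_tree \<phi>) ts = A2 @ t2 # B2" using cs_ctx.prems(1) s by auto
  obtain A V where AV: "ts = A @ V" "A2 = map (map_tree \<phi>) A" "t2 # B2 = map (map_tree \<phi>) V"
    using mts by (auto simp: map_eq_append_conv)
  obtain t B where tB: "V = t # B" "map_tree \<phi> t = t2" "B2 = map (map_tree \<phi>) B"
    using AV(3) by (auto simp: map_eq_Cons_conv)
  have ft: "ftree C1 t" using cs_ctx.prems(2) s AV tB by (simp add: ftree_Node_iff)
  obtain t' where t': "cstep C1 t t'" "t2' = map_tree \<phi> t'" using cs_ctx.IH[OF tB(2)[symmetric] ft] by blast
  have "cstep C1 s (Node x (A @ t' # B))" using cstep.cs_ctx[OF t'(1)] s AV tB by simp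
  moreover have "Node x2 (A2 @ t2' # B2) = map_tree \<phi> (Node x (A @ t' # B))" using x2 AV tB t' by simp
  ultimately show ?case by blast
qed

lemma Rs_reflect:
  assumes co1: "coloured_operad k C1" and co2: "coloured_operad k C2" and m: "coperad_morphism C1 C2 \<phi>"
    and inj: "inj_on \<phi> (carrier C1)"
  shows "(R C2)\<^sup>*\<^sup>* v u \<Longrightarrow> v = map_tree \<phi> s \<Longrightarrow> ftree C1 s \<Longrightarrow> \<exists>s'. (R C1)\<^sup>*\<^sup>* s s' \<and> u = map_tree \<phi> s'"
proof (induction rule: rtranclp_induct)
  case base then show ?case by blast
next
  case (step a b)
  then obtain s1 where s1: "(R C1)\<^sup>*\<^sup>* s s1" "a = map_tree \<phi> s1" by blast
  have f1: "ftree C1 s1" using Rs_ftree[OF s1(1) co1 step.prems(2)] .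
  have "cstep C2 a b" using step.hyps(2) by (simp add: R_def)
  then obtain s2 where s2: "cstep C1 s1 s2" "b = map_tree \<phi> s2"
    using cstep_reflect[OF co1 co2 m inj _ s1(2) f1] by blast
  have "R C1 s1 s2" using s2 f1 by (simp add: R_def)
  then have "(R C1)\<^sup>*\<^sup>* s s2" by (rule rtranclp.rtrancl_into_rtrancl[OF s1(1)])
  then show ?case using s2(2) by blast
qed

lemma set_tree_ftree: "ftree C t \<Longrightarrow> set_tree t \<subseteq> carrier C"
  by (induction rule: ftree.induct) (auto simp: cplus_def)

lemma env_inj:
  assumes co1: "coloured_operad k C1" and co2: "coloured_operad k C2" and m: "coperad_morphism C1 C2 \<phi>"
    and inj: "inj_on \<phi> (carrier C1)"
  shows "inj_on (env_map C2 \<phi>) (ocarrier (Env C1))"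
proof (rule inj_onI)
  fix X Y assume hX: "X \<in> ocarrier (Env C1)" and hY: "Y \<in> ocarrier (Env C1)" and eq: "env_map C2 \<phi> X = env_map C2 \<phi> Y"
  obtain s where s: "ftree C1 s" "X = env_class C1 s" using hX by (auto simp: ocarrier_iff)
  obtain t where t: "ftree C1 t" "Y = env_class C1 t" using hY by (auto simp: ocarrier_iff)
  have fm: "ftree C2 (map_tree \<phi> t)" using map_ftree[OF t(1) m] .
  have "env_class C2 (map_tree \<phi> s) = env_class C2 (map_tree \<phi> t)"
    using eq s t env_map_class[OF co1 m s(1)] env_map_class[OF co1 m t(1)] by simp
  then have "map_tree \<phi> t \<in> env_class C2 (map_tree \<phi> s)" using class_mem[OF fm] by simp
  then have "env_rel C2 (map_tree \<phi> s) (map_tree \<phi> t)" by (simp add: env_class_def)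
  then obtain u where u: "(R C2)\<^sup>*\<^sup>* (map_tree \<phi> s) u" "(R C2)\<^sup>*\<^sup>* (map_tree \<phi> t) u"
    using env_join[OF _ co2] by blast
  obtain s' where s': "(R C1)\<^sup>*\<^sup>* s s'" "u = map_tree \<phi> s'" using Rs_reflect[OF co1 co2 m inj u(1) refl s(1)] by blast
  obtain t' where t': "(R C1)\<^sup>*\<^sup>* t t'" "u = map_tree \<phi> t'" using Rs_reflect[OF co1 co2 m inj u(2) refl t(1)] by blast
  have fs': "ftree C1 s'" using Rs_ftree[OF s'(1) co1 s(1)] .
  have ft': "ftree C1 t'" using Rs_ftree[OF t'(1) co1 t(1)] .
  have "s' = t'"
  proof (rule tree.inj_map_strong[of s' t' \<phi> \<phi>])
    fix a b assume "a \<in> set_tree s'" "b \<in> set_tree t'" "\<phi> a = \<phi> b"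
    then show "a = b" using set_tree_ftree[OF fs'] set_tree_ftree[OF ft'] inj by (meson inj_onD subsetD)
  next
    show "map_tree \<phi> s' = map_tree \<phi> t'" using s'(2) t'(2) by simp
  qed
  have "env_rel C1 s s'" using Rs_env[OF s'(1) co1 s(1)] .
  moreover have "env_rel C1 t s'" using Rs_env[OF t'(1) co1 t(1)] \<open>s' = t'\<close> by simp
  ultimately have "env_rel C1 s t" using env_rel.env_trans env_rel.env_sym by blast
  then show "X = Y" using s t class_eq by simp
qed

lemma list_lift: "\<forall>t\<in>set ts. \<exists>t1. P t1 \<and> f t1 = t \<Longrightarrow> \<exists>ts1. (\<forall>t\<in>set ts1. P t) \<and> map f ts1 = ts"
proof (induction ts)
  case Nil then show ?case by simp
next
  case (Cons t ts)
  then obtain t1 ts1 where "P t1" "f t1 = t" "\<forall>t\<in>set ts1. P t" "map f ts1 = ts" by auto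
  then show ?case by (intro exI[of _ "t1 # ts1"]) auto
qed

lemma lift_tree:
  assumes m: "coperad_morphism C1 C2 \<phi>" and sur: "\<phi> ` carrier C1 = carrier C2"
  shows "ftree C2 t \<Longrightarrow> \<exists>t1. ftree C1 t1 \<and> map_tree \<phi> t1 = t"
proof (induction rule: ftree.induct)
  case ftree_Leaf then show ?case using ftree.ftree_Leaf by fastforce
next
  case (ftree_Node x ts)
  have "x \<in> carrier C2" using ftree_Node.hyps(1) by (simp add: cplus_def)
  then obtain x1 where x1: "x1 \<in> carrier C1" "\<phi> x1 = x" using sur by (metis imageE)
  have ar: "arity C1 x1 = arity C2 x" using morph_carrier[OF m x1(1)] x1(2) by simp
  then have x1c: "x1 \<in> cplus C1" using x1 ftree_Node.hyps(1) by (simp add: cplus_def)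
  have "\<forall>t\<in>set ts. \<exists>t1. ftree C1 t1 \<and> map_tree \<phi> t1 = t" using ftree_Node by auto
  then obtain ts1 where ts1: "\<forall>t\<in>set ts1. ftree C1 t" "map (map_tree \<phi>) ts1 = ts"
    using list_lift[of ts "ftree C1" "map_tree \<phi>"] by blast
  have "length ts1 = arity C1 x1" using ts1(2) ar ftree_Node by auto
  then have "ftree C1 (Node x1 ts1)" using ts1 x1c by (auto simp: ftree_Node_iff)
  moreover have "map_tree \<phi> (Node x1 ts1) = Node x ts" using ts1 x1 by simp
  ultimately show ?case by blast
qed

theorem theorem1p2:
  fixes k :: nat
    and C1 :: "'a coperad" and C2 :: "'b coperad" and C3 :: "'c coperad"
    and \<phi> :: "'a \<Rightarrow> 'b" and \<psi> :: "'b \<Rightarrow> 'c"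
  assumes "1 \<le> k"
    and "coloured_operad k C1" and "coloured_operad k C2" and "coloured_operad k C3"
    and "coperad_morphism C1 C2 \<phi>" and "coperad_morphism C2 C3 \<psi>"
  shows
    \<comment> \<open>(i) Env(phi) is a well-defined operad morphism, c(x) maps to c(phi x), and it is
        the unique operad morphism with this property\<close>
    "(\<forall>t. ftree C1 t \<longrightarrow> env_map C2 \<phi> (env_class C1 t) = env_class C2 (map_tree \<phi> t))
     \<and> operad_hom (Env C1) (Env C2) (env_map C2 \<phi>)
     \<and> (\<forall>x\<in>cplus C1. env_map C2 \<phi> (env_class C1 (corolla C1 x))
                        = env_class C2 (corolla C2 (\<phi> x)))
     \<and> (\<forall>G. operad_hom (Env C1) (Env C2) G
            \<and> (\<forall>x\<in>cplus C1. G (env_class C1 (corolla C1 x)) = env_class C2 (corolla C2 (\<phi> x)))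
          \<longrightarrow> (\<forall>X\<in>ocarrier (Env C1). G X = env_map C2 \<phi> X))
     \<comment> \<open>(ii) functoriality\<close>
     \<and> (\<forall>X\<in>ocarrier (Env C1). env_map C3 (\<psi> \<circ> \<phi>) X = env_map C3 \<psi> (env_map C2 \<phi> X))
     \<and> (\<forall>X\<in>ocarrier (Env C1). env_map C1 id X = X)
     \<comment> \<open>(iii) preservation of injections and surjections\<close>
     \<and> (inj_on \<phi> (carrier C1) \<longrightarrow> inj_on (env_map C2 \<phi>) (ocarrier (Env C1)))
     \<and> (\<phi> ` carrier C1 = carrier C2 \<longrightarrow> env_map C2 \<phi> ` ocarrier (Env C1) = ocarrier (Env C2))"
proof -
  note co1 = assms(2) and co2 = assms(3) and co3 = assms(4) and m = assms(5) and m2 = assms(6)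
  have P1: "\<forall>t. ftree C1 t \<longrightarrow> env_map C2 \<phi> (env_class C1 t) = env_class C2 (map_tree \<phi> t)"
    using env_map_class[OF co1 m] by blast
  have P2: "operad_hom (Env C1) (Env C2) (env_map C2 \<phi>)" by (rule env_hom[OF co1 co2 m])
  have P3: "\<forall>x\<in>cplus C1. env_map C2 \<phi> (env_class C1 (corolla C1 x)) = env_class C2 (corolla C2 (\<phi> x))"
  proof
    fix x assume x: "x \<in> cplus C1"
    have "x \<in> carrier C1" using x by (simp add: cplus_def)
    then show "env_map C2 \<phi> (env_class C1 (corolla C1 x)) = env_class C2 (corolla C2 (\<phi> x))"
      using env_map_class[OF co1 m corolla_ftree[OF x]] map_corolla[OF m] by simp
  qed
  have P4: "\<forall>G. operad_hom (Env C1) (Env C2) G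
            \<and> (\<forall>x\<in>cplus C1. G (env_class C1 (corolla C1 x)) = env_class C2 (corolla C2 (\<phi> x)))
          \<longrightarrow> (\<forall>X\<in>ocarrier (Env C1). G X = env_map C2 \<phi> X)"
  proof (intro allI impI ballI)
    fix G X assume hG: "operad_hom (Env C1) (Env C2) G
            \<and> (\<forall>x\<in>cplus C1. G (env_class C1 (corolla C1 x)) = env_class C2 (corolla C2 (\<phi> x)))"
      and hX: "X \<in> ocarrier (Env C1)"
    obtain t where t: "ftree C1 t" "X = env_class C1 t" using hX by (auto simp: ocarrier_iff)
    have "G (env_class C1 t) = env_class C2 (map_tree \<phi> t)"
      using unique[OF co1 co2 m conjunct1[OF hG] conjunct2[OF hG] t(1)] .
    then show "G X = env_map C2 \<phi> X" using t env_map_class[OF co1 m t(1)] by simp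
  qed
  have P5: "\<forall>X\<in>ocarrier (Env C1). env_map C3 (\<psi> \<circ> \<phi>) X = env_map C3 \<psi> (env_map C2 \<phi> X)"
  proof
    fix X assume hX: "X \<in> ocarrier (Env C1)"
    obtain t where t: "ftree C1 t" "X = env_class C1 t" using hX by (auto simp: ocarrier_iff)
    have ft2: "ftree C2 (map_tree \<phi> t)" using map_ftree[OF t(1) m] .
    have "env_map C3 (\<psi> \<circ> \<phi>) X = env_class C3 (map_tree (\<psi> \<circ> \<phi>) t)"
      using env_map_class[OF co1 morph_compose[OF m m2] t(1)] t(2) by simp
    also have "\<dots> = env_map C3 \<psi> (env_class C2 (map_tree \<phi> t))"
      using env_map_class[OF co2 m2 ft2] by (simp add: tree.map_comp)
    also have "\<dots> = env_map C3 \<psi> (env_map C2 \<phi> X)" using env_map_class[OF co1 m t(1)] t(2) by simp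
    finally show "env_map C3 (\<psi> \<circ> \<phi>) X = env_map C3 \<psi> (env_map C2 \<phi> X)" .
  qed
  have P6: "\<forall>X\<in>ocarrier (Env C1). env_map C1 id X = X"
  proof
    fix X assume hX: "X \<in> ocarrier (Env C1)"
    obtain t where t: "ftree C1 t" "X = env_class C1 t" using hX by (auto simp: ocarrier_iff)
    show "env_map C1 id X = X" unfolding env_map_def tree.map_id t(2) using class_rep[OF t(1)] .
  qed
  have P7: "inj_on \<phi> (carrier C1) \<longrightarrow> inj_on (env_map C2 \<phi>) (ocarrier (Env C1))"
    using env_inj[OF co1 co2 m] by blast
  have P8: "\<phi> ` carrier C1 = carrier C2 \<longrightarrow> env_map C2 \<phi> ` ocarrier (Env C1) = ocarrier (Env C2)"
  proof
    assume sur: "\<phi> ` carrier C1 = carrier C2"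
    show "env_map C2 \<phi> ` ocarrier (Env C1) = ocarrier (Env C2)"
    proof
      show "env_map C2 \<phi> ` ocarrier (Env C1) \<subseteq> ocarrier (Env C2)"
        using P2 unfolding operad_hom_def by blast
    next
      show "ocarrier (Env C2) \<subseteq> env_map C2 \<phi> ` ocarrier (Env C1)"
      proof
        fix Y assume hY: "Y \<in> ocarrier (Env C2)"
        obtain t where t: "ftree C2 t" "Y = env_class C2 t" using hY by (auto simp: ocarrier_iff)
        obtain t1 where t1: "ftree C1 t1" "map_tree \<phi> t1 = t" using lift_tree[OF m sur t(1)] by blast
        have "Y = env_map C2 \<phi> (env_class C1 t1)" using env_map_class[OF co1 m t1(1)] t t1 by simp
        moreover have "env_class C1 t1 \<in> ocarrier (Env C1)" using t1 by (auto simp: ocarrier_iff)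
        ultimately show "Y \<in> env_map C2 \<phi> ` ocarrier (Env C1)" by blast
      qed
    qed
  qed
  show ?thesis using P1 P2 P3 P4 P5 P6 P7 P8 by blast
qed

end
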